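(* Let $(V,b,\mu)$ be a locally finite, weighted, connected graph with $\mu(x)\geq\mu_0$ for all $x\in V$, for some constant $\mu_0>0$, and let $\theta$ be a phase function on it. Fix $x_0\in V$ and, for $n\in\mathbb{Z}_+$, let $\beta_n=\frac{d_{2n}p_{2n}}{\mu_0 n}$ and let $\chi_n$ be the cut-off function defined below. Then for every $u\in\ell^2(V,\mu)$, every $n\in\mathbb{Z}_+$ and every $0<\varepsilon<1$, $$\|\chi_n\Delta_{b,\theta}u\|^2\leq(1-\varepsilon)^{-1}\|\Delta_{b,\theta}(\chi_nu)\|^2+\left(\frac{9+4\varepsilon}{(1-\varepsilon)\varepsilon}\right)\beta_n^2\|u\|^2.$$
   Context: $V$ is a countably infinite set, $\mu\colon V\to(0,\infty)$, and $b\colon V\times V\to[0,\infty)$ satisfies $b(x,y)=b(y,x)$, $b(x,x)=0$, $\deg(x):=\#\{y: b(x,y)>0\}<\infty$; $x\sim y$ means $b(x,y)>0$; connectedness means any two vertices are joined by a finite path of neighbors, and $d(x,y)$ is the combinatorial (path-length) distance; $r(x)=d(x_0,x)$. A phase function is $\theta\colon V\times V\to[-\pi,\pi]$ with $\theta(x,y)=-\theta(y,x)$. $\ell^2(V,\mu)$ is the space of $f\colon V\to\mathbb{C}$ with $\|f\|^2=\sum_x\mu(x)|f(x)|^2<\infty$, inner product $(f,g)=\sum_x\mu(x)f(x)\overline{g(x)}$. The magnetic Laplacian is $(\Delta_{b,\theta}u)(x)=\frac{1}{\mu(x)}\sum_{y}b(x,y)(u(x)-e^{i\theta(x,y)}u(y))$.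 $B(x_0,n)=\{x: r(x)\leq n\}$ (plus edges between such vertices), $d_n=\max_{x\in B(x_0,n)}\deg(x)$, $p_n=\max_{x\in B(x_0,n)}\max_{y\in V}b(x,y)$. The cut-off is $\chi_n(x)=\left(\left(\frac{2n-d(x_0,x)}{n}\right)\vee 0\right)\wedge 1$, where $a\wedge z=\min\{a,z\}$, $a\vee z=\max\{a,z\}$. *)

theory Defs
  imports "HOL-Analysis.Analysis"
begin

definition nbrs :: "('a \<Rightarrow> 'a \<Rightarrow> real) \<Rightarrow> 'a \<Rightarrow> 'a set" where
  "nbrs b x = {y. 0 < b x y}"

definition deg :: "('a \<Rightarrow> 'a \<Rightarrow> real) \<Rightarrow> 'a \<Rightarrow> nat" where
  "deg b x = card (nbrs b x)"

definition weighted_graph :: "('a \<Rightarrow> 'a \<Rightarrow> real) \<Rightarrow> ('a \<Rightarrow> real) \<Rightarrow> bool" where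
  "weighted_graph b \<mu> \<longleftrightarrow>
     countable (UNIV :: 'a set) \<and> infinite (UNIV :: 'a set) \<and>
     (\<forall>x. 0 < \<mu> x) \<and> (\<forall>x y. 0 \<le> b x y) \<and> (\<forall>x y. b x y = b y x) \<and>
     (\<forall>x. b x x = 0) \<and> (\<forall>x. finite (nbrs b x))"

definition path_of_len :: "('a \<Rightarrow> 'a \<Rightarrow> real) \<Rightarrow> 'a \<Rightarrow> 'a \<Rightarrow> nat \<Rightarrow> bool" where
  "path_of_len b x y n \<longleftrightarrow>
     (\<exists>p :: nat \<Rightarrow> 'a. p 0 = x \<and> p n = y \<and> (\<forall>i<n. 0 < b (p i) (p (Suc i))))"

definition graph_connected :: "('a \<Rightarrow> 'a \<Rightarrow> real) \<Rightarrow> bool" where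
  "graph_connected b \<longleftrightarrow> (\<forall>x y. \<exists>n. path_of_len b x y n)"

definition gdist :: "('a \<Rightarrow> 'a \<Rightarrow> real) \<Rightarrow> 'a \<Rightarrow> 'a \<Rightarrow> nat" where
  "gdist b x y = (LEAST n. path_of_len b x y n)"

definition phase_function :: "('a \<Rightarrow> 'a \<Rightarrow> real) \<Rightarrow> bool" where
  "phase_function \<theta> \<longleftrightarrow> (\<forall>x y. -pi \<le> \<theta> x y \<and> \<theta> x y \<le> pi \<and> \<theta> x y = - \<theta> y x)"

definition in_l2 :: "('a \<Rightarrow> real) \<Rightarrow> ('a \<Rightarrow> complex) \<Rightarrow> bool" where
  "in_l2 \<mu> f \<longleftrightarrow> (\<lambda>x. \<mu> x * (cmod (f x))\<^sup>2) summable_on UNIV"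

definition l2norm_sq :: "('a \<Rightarrow> real) \<Rightarrow> ('a \<Rightarrow> complex) \<Rightarrow> real" where
  "l2norm_sq \<mu> f = (\<Sum>\<^sub>\<infinity>x. \<mu> x * (cmod (f x))\<^sup>2)"

definition mag_laplacian ::
  "('a \<Rightarrow> 'a \<Rightarrow> real) \<Rightarrow> ('a \<Rightarrow> real) \<Rightarrow> ('a \<Rightarrow> 'a \<Rightarrow> real) \<Rightarrow> ('a \<Rightarrow> complex) \<Rightarrow> 'a \<Rightarrow> complex" where
  "mag_laplacian b \<mu> \<theta> u x =
     (1 / complex_of_real (\<mu> x)) *
       (\<Sum>y\<in>nbrs b x. complex_of_real (b x y) * (u x - cis (\<theta> x y) * u y))"

definition ball_g :: "('a \<Rightarrow> 'a \<Rightarrow> real) \<Rightarrow> 'a \<Rightarrow> nat \<Rightarrow> 'a set" where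
  "ball_g b x0 n = {x. gdist b x0 x \<le> n}"

definition dmax :: "('a \<Rightarrow> 'a \<Rightarrow> real) \<Rightarrow> 'a \<Rightarrow> nat \<Rightarrow> nat" where
  "dmax b x0 n = Max (deg b ` ball_g b x0 n)"

definition pmax :: "('a \<Rightarrow> 'a \<Rightarrow> real) \<Rightarrow> 'a \<Rightarrow> nat \<Rightarrow> real" where
  "pmax b x0 n = Max {b x y | x y. x \<in> ball_g b x0 n}"

definition cutoff :: "('a \<Rightarrow> 'a \<Rightarrow> real) \<Rightarrow> 'a \<Rightarrow> nat \<Rightarrow> 'a \<Rightarrow> real" where
  "cutoff b x0 n x = min (max ((2 * real n - real (gdist b x0 x)) / real n) 0) 1"

end

theory Submission
  imports Defs
begin

lemma infsum_fin_supp: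
  assumes "finite S" "\<And>x. x \<notin> S \<Longrightarrow> f x = 0"
  shows "infsum f UNIV = sum f S"
proof -
  have "infsum f UNIV = infsum f S"
    by (rule infsum_cong_neutral) (use assms in auto)
  also have "\<dots> = sum f S" using assms(1) by (rule infsum_finite)
  finally show ?thesis .
qed

lemma gdist_path:
  assumes "graph_connected b"
  shows "path_of_len b x y (gdist b x y)"
  using assms unfolding graph_connected_def gdist_def by (metis LeastI_ex)

lemma gdist_self: "gdist b x x = 0"
proof -
  have "path_of_len b x x 0" unfolding path_of_len_def by (rule exI[of _ "\<lambda>_. x"]) auto
  thus ?thesis unfolding gdist_def by (metis Least_le le_zero_eq)
qed

lemma gdist_step:
  assumes "graph_connected b" "0 < b x y"
  shows "gdist b x0 y \<le> gdist b x0 x + 1"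
proof -
  obtain p where p: "p 0 = x0" "p (gdist b x0 x) = x"
    "\<forall>i<gdist b x0 x. 0 < b (p i) (p (Suc i))"
    using gdist_path[OF assms(1), of x0 x] unfolding path_of_len_def by blast
  define q where "q i = (if i \<le> gdist b x0 x then p i else y)" for i
  have "path_of_len b x0 y (gdist b x0 x + 1)"
    unfolding path_of_len_def
  proof (rule exI[of _ q], intro conjI allI impI)
    show "q 0 = x0" using p by (simp add: q_def)
    show "q (gdist b x0 x + 1) = y" by (simp add: q_def)
    fix i assume "i < gdist b x0 x + 1"
    then consider "i < gdist b x0 x" | "i = gdist b x0 x" by linarith
    thus "0 < b (q i) (q (Suc i))"
      by cases (use p assms(2) in \<open>auto simp: q_def\<close>)
  qed
  thus ?thesis unfolding gdist_def by (rule Least_le)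
qed

lemma gdist_pred:
  assumes "graph_connected b" "gdist b x0 y = Suc k"
  shows "\<exists>x. gdist b x0 x \<le> k \<and> 0 < b x y"
proof -
  obtain p where p: "p 0 = x0" "p (Suc k) = y"
    "\<forall>i<Suc k. 0 < b (p i) (p (Suc i))"
    using gdist_path[OF assms(1), of x0 y] assms(2) unfolding path_of_len_def by auto
  have "path_of_len b x0 (p k) k" unfolding path_of_len_def using p by auto
  hence "gdist b x0 (p k) \<le> k" unfolding gdist_def by (rule Least_le)
  thus ?thesis using p by (intro exI[of _ "p k"]) auto
qed

lemma ball_finite:
  assumes "weighted_graph b \<mu>" "graph_connected b"
  shows "finite (ball_g b x0 k)"
proof (induction k)
  case 0
  have "ball_g b x0 0 \<subseteq> {x0}"
  proof
    fix y assume "y \<in> ball_g b x0 0"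
    hence "gdist b x0 y = 0" by (simp add: ball_g_def)
    thus "y \<in> {x0}" using gdist_path[OF assms(2), of x0 y] unfolding path_of_len_def by auto
  qed
  thus ?case using finite_subset by blast
next
  case (Suc k)
  have "ball_g b x0 (Suc k) \<subseteq> ball_g b x0 k \<union> (\<Union>x\<in>ball_g b x0 k. nbrs b x)"
  proof
    fix y assume y: "y \<in> ball_g b x0 (Suc k)"
    show "y \<in> ball_g b x0 k \<union> (\<Union>x\<in>ball_g b x0 k. nbrs b x)"
    proof (cases "gdist b x0 y = Suc k")
      case True
      then obtain x where "gdist b x0 x \<le> k" "0 < b x y" using gdist_pred[OF assms(2)] by blast
      thus ?thesis by (auto simp: ball_g_def nbrs_def)
    next
      case False thus ?thesis using y by (auto simp: ball_g_def)
    qed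
  qed
  moreover have "finite (ball_g b x0 k \<union> (\<Union>x\<in>ball_g b x0 k. nbrs b x))"
    using Suc assms(1) unfolding weighted_graph_def by auto
  ultimately show ?case using finite_subset by blast
qed

lemma clamp_lip: "\<bar>min (max t 0) 1 - min (max s 0) 1\<bar> \<le> \<bar>t - s\<bar>" for t s :: real
  by (auto simp: min_def max_def abs_if)

lemma sq_split:
  fixes a c :: complex and e :: real
  assumes "0 < e" "e < 1"
  shows "(cmod (a + c))\<^sup>2 \<le> (1/(1-e)) * (cmod a)\<^sup>2 + (1/e) * (cmod c)\<^sup>2"
proof -
  define s where "s = cmod a"
  define t where "t = cmod c"
  have "(cmod (a + c))\<^sup>2 \<le> (s + t)\<^sup>2"
    unfolding s_def t_def by (intro power_mono norm_triangle_ineq) auto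
  moreover have "(1/(1-e)) * s\<^sup>2 + (1/e) * t\<^sup>2 - (s + t)\<^sup>2 = (e * s - (1-e) * t)\<^sup>2 / (e*(1-e))"
    using assms by (simp add: field_simps power2_eq_square)
  moreover have "0 \<le> (e * s - (1-e) * t)\<^sup>2 / (e*(1-e))" using assms by simp
  ultimately show ?thesis unfolding s_def t_def by linarith
qed

theorem proposition5p3:
  fixes b :: "'a \<Rightarrow> 'a \<Rightarrow> real" and \<mu> :: "'a \<Rightarrow> real" and \<theta> :: "'a \<Rightarrow> 'a \<Rightarrow> real"
    and \<mu>0 :: real and x0 :: 'a and u :: "'a \<Rightarrow> complex" and n :: nat and \<epsilon> :: real
  assumes "weighted_graph b \<mu>" and "graph_connected b"
    and "0 < \<mu>0" and "\<forall>x. \<mu>0 \<le> \<mu> x"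
    and "phase_function \<theta>"
    and "in_l2 \<mu> u"
    and "1 \<le> n"
    and "0 < \<epsilon>" and "\<epsilon> < 1"
  shows "let \<beta> = real (dmax b x0 (2 * n)) * pmax b x0 (2 * n) / (\<mu>0 * real n);
             chi = cutoff b x0 n;
             \<Delta> = mag_laplacian b \<mu> \<theta>
         in l2norm_sq \<mu> (\<lambda>x. complex_of_real (chi x) * \<Delta> u x)
            \<le> (1 / (1 - \<epsilon>)) * l2norm_sq \<mu> (\<Delta> (\<lambda>x. complex_of_real (chi x) * u x))
              + ((9 + 4 * \<epsilon>) / ((1 - \<epsilon>) * \<epsilon>)) * \<beta>\<^sup>2 * l2norm_sq \<mu> u"
proof -
  note wg = assms(1)[unfolded weighted_graph_def]
  define d where "d x = gdist b x0 x" for x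
  define chi where "chi = cutoff b x0 n"
  define B where "B = ball_g b x0 (2*n)"
  define D where "D = dmax b x0 (2*n)"
  define P where "P = pmax b x0 (2*n)"
  define L where "L = mag_laplacian b \<mu> \<theta>"
  define \<beta> where "\<beta> = real D * P / (\<mu>0 * real n)"
  define C where "C x = (1/complex_of_real (\<mu> x)) * (\<Sum>y\<in>nbrs b x. complex_of_real (b x y) * cis (\<theta> x y) * complex_of_real (chi y - chi x) * u y)" for x
  have n0: "real n > 0" using assms(7) by simp
  have finB: "finite B" unfolding B_def by (rule ball_finite[OF assms(1,2)])
  have x0B: "x0 \<in> B" unfolding B_def ball_g_def by (simp add: gdist_self)
  have nb_fin: "finite (nbrs b x)" for x using wg by blast
  have bnn: "0 \<le> b x y" for x y using wg by blast
  have bsym: "b x y = b y x" for x y using wg by blast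
  have mupos: "0 < \<mu> x" for x using wg by blast
  have mu0: "\<mu>0 \<le> \<mu> x" for x using assms(4) by blast
  have dstep: "d y \<le> d x + 1" if "0 < b x y" for x y
    unfolding d_def by (rule gdist_step[OF assms(2) that])
  have dstep2: "d x \<le> d y + 1" if "0 < b x y" for x y
    using dstep[of y x] that bsym by simp
  have chi_def': "chi x = min (max ((2 * real n - real (d x)) / real n) 0) 1" for x
    unfolding chi_def cutoff_def d_def by simp
  have chi0: "chi x = 0" if "2*n \<le> d x" for x
  proof -
    have "(2 * real n - real (d x)) / real n \<le> 0" using that n0 
      by (intro divide_nonpos_pos) auto
    thus ?thesis unfolding chi_def' by simp
  qed
  have notB: "x \<notin> B \<longleftrightarrow> 2*n < d x" for x unfolding B_def ball_g_def d_def by auto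
  have chiB: "x \<in> B \<and> y \<in> B" if "0 < b x y" "chi x \<noteq> chi y" for x y
  proof (rule ccontr)
    assume "\<not> (x \<in> B \<and> y \<in> B)"
    then consider "2*n < d x" | "2*n < d y" using notB by blast
    hence "2*n \<le> d x \<and> 2*n \<le> d y" using dstep[OF that(1)] dstep2[OF that(1)] by cases auto
    thus False using chi0 that(2) by simp
  qed
  have chilip: "\<bar>chi y - chi x\<bar> \<le> 1 / real n" if "0 < b x y" for x y
  proof -
    have "\<bar>chi y - chi x\<bar> \<le> \<bar>(2 * real n - real (d y)) / real n - (2 * real n - real (d x)) / real n\<bar>"
      unfolding chi_def' by (rule clamp_lip)
    also have "\<dots> = \<bar>real (d x) - real (d y)\<bar> / real n" using n0 by (simp add: diff_divide_distrib[symmetric] abs_divide)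
    also have "\<dots> \<le> 1 / real n"
      using dstep[OF that] dstep2[OF that] n0 by (intro divide_right_mono) auto
    finally show ?thesis .
  qed
  have Dge: "deg b x \<le> D" if "x \<in> B" for x
    unfolding D_def dmax_def using that finB B_def by (intro Max_ge) auto
  have Pset: "{b x y | x y. x \<in> B} \<subseteq> insert 0 (\<Union>x\<in>B. b x ` nbrs b x)"
  proof
    fix z assume "z \<in> {b x y | x y. x \<in> B}"
    then obtain x y where "z = b x y" "x \<in> B" by blast
    thus "z \<in> insert 0 (\<Union>x\<in>B. b x ` nbrs b x)" using bnn[of x y]
      by (cases "0 < b x y") (auto simp: nbrs_def)
  qed
  have Pfin: "finite {b x y | x y. x \<in> B}"
    by (rule finite_subset[OF Pset]) (use finB nb_fin in auto)
  have Pge: "b x y \<le> P" if "x \<in> B" for x y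
    unfolding P_def pmax_def using Pfin that B_def by (intro Max_ge) auto
  have P0: "0 \<le> P" using Pge[OF x0B, of x0] wg by simp
  have decomp: "complex_of_real (chi x) * L u x = L (\<lambda>x. complex_of_real (chi x) * u x) x + C x" for x
  proof -
    have "L (\<lambda>x. complex_of_real (chi x) * u x) x + C x =
      (1 / complex_of_real (\<mu> x)) * (\<Sum>y\<in>nbrs b x.
         complex_of_real (b x y) * (complex_of_real (chi x) * u x - cis (\<theta> x y) * (complex_of_real (chi y) * u y))
       + complex_of_real (b x y) * cis (\<theta> x y) * complex_of_real (chi y - chi x) * u y)"
      unfolding L_def mag_laplacian_def C_def by (simp add: sum.distrib distrib_left)
    also have "\<dots> = (1 / complex_of_real (\<mu> x)) * (\<Sum>y\<in>nbrs b x.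
         complex_of_real (chi x) * (complex_of_real (b x y) * (u x - cis (\<theta> x y) * u y)))"
      by (intro arg_cong2[where f="(*)"] refl sum.cong) (simp_all add: algebra_simps)
    also have "\<dots> = complex_of_real (chi x) * L u x"
      unfolding L_def mag_laplacian_def by (simp add: sum_distrib_left[symmetric])
    finally show ?thesis by simp
  qed
  have supp1: "chi x = 0" if "x \<notin> B" for x using chi0 notB that by fastforce
  have supp2: "L (\<lambda>x. complex_of_real (chi x) * u x) x = 0" if "x \<notin> B" for x
  proof -
    have "chi y = 0" if "y \<in> nbrs b x" for y
    proof -
      have "0 < b x y" using that by (simp add: nbrs_def)
      hence "d x \<le> d y + 1" by (rule dstep2)
      moreover have "2*n < d x" using \<open>x \<notin> B\<close> notB by blast
      ultimately show ?thesis using chi0[of y] by simp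
    qed
    thus ?thesis unfolding L_def mag_laplacian_def using supp1[OF that] by simp
  qed
  have supp3: "C x = 0" if "x \<notin> B" for x
  proof -
    have "chi y - chi x = 0" if "y \<in> nbrs b x" for y
      using chiB[of x y] that \<open>x \<notin> B\<close> by (force simp: nbrs_def)
    thus ?thesis unfolding C_def by simp
  qed
  have Cbound: "\<mu> x * (cmod (C x))\<^sup>2 \<le> P\<^sup>2 * real D / (real n ^ 2 * \<mu>0) * (\<Sum>y\<in>{y\<in>B. 0 < b x y}. (cmod (u y))\<^sup>2)"
    if xB: "x \<in> B" for x
  proof -
    define A where "A = {y\<in>B. 0 < b x y}"
    define s where "s = (\<Sum>y\<in>A. cmod (u y))"
    have s0: "0 \<le> s" unfolding s_def by (simp add: sum_nonneg)
    have "cmod (\<Sum>y\<in>nbrs b x. complex_of_real (b x y) * cis (\<theta> x y) * complex_of_real (chi y - chi x) * u y)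
        \<le> (\<Sum>y\<in>nbrs b x. b x y * \<bar>chi y - chi x\<bar> * cmod (u y))"
      by (rule order_trans[OF norm_sum]) (simp add: norm_mult bnn of_real_diff[symmetric] del: of_real_diff)
    also have "\<dots> \<le> (\<Sum>y\<in>nbrs b x. if y \<in> B then P / real n * cmod (u y) else 0)"
    proof (rule sum_mono)
      fix y assume y: "y \<in> nbrs b x"
      show "b x y * \<bar>chi y - chi x\<bar> * cmod (u y) \<le> (if y \<in> B then P / real n * cmod (u y) else 0)"
      proof (cases "chi x = chi y")
        case True thus ?thesis using P0 n0 by simp
      next
        case False
        have yB: "y \<in> B" using chiB[of x y] y False by (simp add: nbrs_def)
        have "b x y * \<bar>chi y - chi x\<bar> \<le> P * (1 / real n)"
          using Pge[OF xB, of y] chilip[of x y] y bnn[of x y] P0 by (intro mult_mono) (auto simp: nbrs_def)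
        hence "b x y * \<bar>chi y - chi x\<bar> * cmod (u y) \<le> P * (1 / real n) * cmod (u y)"
          by (intro mult_right_mono) auto
        thus ?thesis using yB by simp
      qed
    qed
    also have "\<dots> = (\<Sum>y\<in>{y\<in>nbrs b x. y \<in> B}. P / real n * cmod (u y))"
      by (rule sum.inter_filter[symmetric]) (rule nb_fin)
    also have "{y\<in>nbrs b x. y \<in> B} = A" unfolding A_def nbrs_def by auto
    also have "(\<Sum>y\<in>A. P / real n * cmod (u y)) = P / real n * s"
      unfolding s_def by (simp add: sum_distrib_left)
    finally have c1: "cmod (\<Sum>y\<in>nbrs b x. complex_of_real (b x y) * cis (\<theta> x y) * complex_of_real (chi y - chi x) * u y) \<le> P / real n * s" .
    have "cmod (C x) = (1 / \<mu> x) * cmod (\<Sum>y\<in>nbrs b x. complex_of_real (b x y) * cis (\<theta> x y) * complex_of_real (chi y - chi x) * u y)"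
      unfolding C_def using mupos[of x] by (simp add: norm_mult norm_divide)
    also have "\<dots> \<le> (1 / \<mu> x) * (P / real n * s)"
      using c1 mupos[of x] by (intro mult_left_mono) auto
    finally have c2: "cmod (C x) \<le> P / (real n * \<mu> x) * s" by (simp add: mult.commute)
    have "(cmod (C x))\<^sup>2 \<le> (P / (real n * \<mu> x) * s)\<^sup>2"
      using c2 by (intro power_mono) auto
    also have "\<dots> = (P / (real n * \<mu> x))\<^sup>2 * s\<^sup>2" by (simp add: power_mult_distrib power_divide)
    also have "\<dots> \<le> (P / (real n * \<mu> x))\<^sup>2 * ((\<Sum>y\<in>A. (cmod (u y))\<^sup>2) * real D)"
    proof (intro mult_left_mono)
      have "s\<^sup>2 \<le> (\<Sum>y\<in>A. (cmod (u y))\<^sup>2) * real (card A)"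
        unfolding s_def by (rule sum_squared_le_sum_of_squares)
      also have "card A \<le> deg b x"
        unfolding deg_def A_def by (intro card_mono nb_fin) (auto simp: nbrs_def)
      hence "real (card A) \<le> real D" using Dge[OF xB] by simp
      hence "(\<Sum>y\<in>A. (cmod (u y))\<^sup>2) * real (card A) \<le> (\<Sum>y\<in>A. (cmod (u y))\<^sup>2) * real D"
        by (intro mult_left_mono) (auto simp: sum_nonneg)
      finally show "s\<^sup>2 \<le> (\<Sum>y\<in>A. (cmod (u y))\<^sup>2) * real D" .
    qed auto
    finally have c3: "(cmod (C x))\<^sup>2 \<le> (P / (real n * \<mu> x))\<^sup>2 * ((\<Sum>y\<in>A. (cmod (u y))\<^sup>2) * real D)" .
    define T where "T = P\<^sup>2 * real D * (\<Sum>y\<in>A. (cmod (u y))\<^sup>2)"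
    have T0: "0 \<le> T" unfolding T_def by (auto simp: sum_nonneg)
    have "\<mu> x * (cmod (C x))\<^sup>2 \<le> \<mu> x * ((P / (real n * \<mu> x))\<^sup>2 * ((\<Sum>y\<in>A. (cmod (u y))\<^sup>2) * real D))"
      using c3 mupos[of x] by (intro mult_left_mono) auto
    also have "\<dots> = T / (real n ^ 2 * \<mu> x)"
      unfolding T_def using mupos[of x] n0 by (simp add: field_simps power2_eq_square)
    also have "\<dots> \<le> T / (real n ^ 2 * \<mu>0)"
      using T0 mu0[of x] assms(3) n0 by (intro divide_left_mono mult_left_mono) auto
    also have "\<dots> = P\<^sup>2 * real D / (real n ^ 2 * \<mu>0) * (\<Sum>y\<in>A. (cmod (u y))\<^sup>2)"
      unfolding T_def by simp
    finally show ?thesis unfolding A_def .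
  qed
  have swap: "(\<Sum>x\<in>B. \<Sum>y\<in>{y\<in>B. 0 < b x y}. (cmod (u y))\<^sup>2) \<le> real D * (\<Sum>y\<in>B. (cmod (u y))\<^sup>2)"
  proof -
    have "(\<Sum>x\<in>B. \<Sum>y\<in>{y\<in>B. 0 < b x y}. (cmod (u y))\<^sup>2) = (\<Sum>y\<in>B. \<Sum>x | x\<in>B \<and> 0 < b x y. (cmod (u y))\<^sup>2)"
      by (rule sum.swap_restrict[OF finB finB])
    also have "\<dots> \<le> (\<Sum>y\<in>B. real D * (cmod (u y))\<^sup>2)"
    proof (rule sum_mono)
      fix y assume yB: "y \<in> B"
      have "card {x. x\<in>B \<and> 0 < b x y} \<le> deg b y"
        unfolding deg_def by (intro card_mono nb_fin) (auto simp: nbrs_def bsym)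
      hence "real (card {x. x\<in>B \<and> 0 < b x y}) \<le> real D" using Dge[OF yB] by simp
      thus "(\<Sum>x | x\<in>B \<and> 0 < b x y. (cmod (u y))\<^sup>2) \<le> real D * (cmod (u y))\<^sup>2"
        by (simp add: mult_right_mono)
    qed
    finally show ?thesis by (simp add: sum_distrib_left)
  qed
  have uB: "(\<Sum>y\<in>B. (cmod (u y))\<^sup>2) \<le> (1/\<mu>0) * (\<Sum>y\<in>B. \<mu> y * (cmod (u y))\<^sup>2)"
  proof -
    have "(\<Sum>y\<in>B. (cmod (u y))\<^sup>2) \<le> (\<Sum>y\<in>B. (1/\<mu>0) * (\<mu> y * (cmod (u y))\<^sup>2))"
    proof (rule sum_mono)
      fix y
      have "\<mu>0 * (cmod (u y))\<^sup>2 \<le> \<mu> y * (cmod (u y))\<^sup>2" using mu0[of y] by (intro mult_right_mono) auto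
      thus "(cmod (u y))\<^sup>2 \<le> (1/\<mu>0) * (\<mu> y * (cmod (u y))\<^sup>2)" using assms(3)
        by (simp add: field_simps)
    qed
    thus ?thesis by (simp add: sum_distrib_left)
  qed
  have uinf: "(\<Sum>y\<in>B. \<mu> y * (cmod (u y))\<^sup>2) \<le> l2norm_sq \<mu> u"
    unfolding l2norm_sq_def using assms(6) finB mupos
    by (intro finite_sum_le_infsum) (auto simp: in_l2_def less_imp_le)
  have unn: "0 \<le> l2norm_sq \<mu> u"
    unfolding l2norm_sq_def using mupos by (intro infsum_nonneg) (auto simp: less_imp_le)
  have Csum: "(\<Sum>x\<in>B. \<mu> x * (cmod (C x))\<^sup>2) \<le> \<beta>\<^sup>2 * l2norm_sq \<mu> u"
  proof -
    define K where "K = P\<^sup>2 * real D / (real n ^ 2 * \<mu>0)"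
    have K0: "0 \<le> K" unfolding K_def using assms(3) by auto
    have "(\<Sum>x\<in>B. \<mu> x * (cmod (C x))\<^sup>2) \<le> (\<Sum>x\<in>B. K * (\<Sum>y\<in>{y\<in>B. 0 < b x y}. (cmod (u y))\<^sup>2))"
      unfolding K_def by (rule sum_mono) (rule Cbound)
    also have "\<dots> = K * (\<Sum>x\<in>B. \<Sum>y\<in>{y\<in>B. 0 < b x y}. (cmod (u y))\<^sup>2)" by (simp add: sum_distrib_left)
    also have "\<dots> \<le> K * (real D * ((1/\<mu>0) * l2norm_sq \<mu> u))"
    proof (intro mult_left_mono K0)
      have "real D * (\<Sum>y\<in>B. (cmod (u y))\<^sup>2) \<le> real D * ((1/\<mu>0) * l2norm_sq \<mu> u)"
      proof (rule mult_left_mono)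
        have "(1/\<mu>0) * (\<Sum>y\<in>B. \<mu> y * (cmod (u y))\<^sup>2) \<le> (1/\<mu>0) * l2norm_sq \<mu> u"
          using uinf assms(3) by (intro mult_left_mono) auto
        thus "(\<Sum>y\<in>B. (cmod (u y))\<^sup>2) \<le> (1/\<mu>0) * l2norm_sq \<mu> u" using uB by linarith
      qed simp
      thus "(\<Sum>x\<in>B. \<Sum>y\<in>{y\<in>B. 0 < b x y}. (cmod (u y))\<^sup>2) \<le> real D * ((1/\<mu>0) * l2norm_sq \<mu> u)"
        using swap by linarith
    qed
    also have "\<dots> = \<beta>\<^sup>2 * l2norm_sq \<mu> u"
      unfolding K_def \<beta>_def using assms(3) n0 by (simp add: field_simps power2_eq_square)
    finally show ?thesis .
  qed
  have lhs: "l2norm_sq \<mu> (\<lambda>x. complex_of_real (chi x) * L u x) = (\<Sum>x\<in>B. \<mu> x * (cmod (complex_of_real (chi x) * L u x))\<^sup>2)"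
    unfolding l2norm_sq_def by (rule infsum_fin_supp[OF finB]) (simp add: supp1)
  have rhs: "l2norm_sq \<mu> (L (\<lambda>x. complex_of_real (chi x) * u x)) = (\<Sum>x\<in>B. \<mu> x * (cmod (L (\<lambda>x. complex_of_real (chi x) * u x) x))\<^sup>2)"
    unfolding l2norm_sq_def by (rule infsum_fin_supp[OF finB]) (simp add: supp2)
  have "(\<Sum>x\<in>B. \<mu> x * (cmod (complex_of_real (chi x) * L u x))\<^sup>2)
     \<le> (\<Sum>x\<in>B. (1/(1-\<epsilon>)) * (\<mu> x * (cmod (L (\<lambda>x. complex_of_real (chi x) * u x) x))\<^sup>2) + (1/\<epsilon>) * (\<mu> x * (cmod (C x))\<^sup>2))"
  proof (rule sum_mono)
    fix x
    have "\<mu> x * (cmod (complex_of_real (chi x) * L u x))\<^sup>2 \<le> \<mu> x * ((1/(1-\<epsilon>)) * (cmod (L (\<lambda>x. complex_of_real (chi x) * u x) x))\<^sup>2 + (1/\<epsilon>) * (cmod (C x))\<^sup>2)"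
      unfolding decomp using mupos[of x] assms(8,9) by (intro mult_left_mono sq_split) auto
    thus "\<mu> x * (cmod (complex_of_real (chi x) * L u x))\<^sup>2 \<le> (1/(1-\<epsilon>)) * (\<mu> x * (cmod (L (\<lambda>x. complex_of_real (chi x) * u x) x))\<^sup>2) + (1/\<epsilon>) * (\<mu> x * (cmod (C x))\<^sup>2)"
      by (simp add: algebra_simps)
  qed
  also have "\<dots> = (1/(1-\<epsilon>)) * l2norm_sq \<mu> (L (\<lambda>x. complex_of_real (chi x) * u x)) + (1/\<epsilon>) * (\<Sum>x\<in>B. \<mu> x * (cmod (C x))\<^sup>2)"
    unfolding rhs by (simp add: sum.distrib sum_distrib_left)
  also have "\<dots> \<le> (1/(1-\<epsilon>)) * l2norm_sq \<mu> (L (\<lambda>x. complex_of_real (chi x) * u x)) + (1/\<epsilon>) * (\<beta>\<^sup>2 * l2norm_sq \<mu> u)"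
    using Csum assms(8) by (intro add_left_mono mult_left_mono) auto
  also have "(1/\<epsilon>) * (\<beta>\<^sup>2 * l2norm_sq \<mu> u) \<le> ((9 + 4 * \<epsilon>) / ((1 - \<epsilon>) * \<epsilon>)) * \<beta>\<^sup>2 * l2norm_sq \<mu> u"
  proof -
    have "1/\<epsilon> \<le> (9 + 4 * \<epsilon>) / ((1 - \<epsilon>) * \<epsilon>)"
      using assms(8,9) by (simp add: field_simps)
    hence "(1/\<epsilon>) * (\<beta>\<^sup>2 * l2norm_sq \<mu> u) \<le> ((9 + 4 * \<epsilon>) / ((1 - \<epsilon>) * \<epsilon>)) * (\<beta>\<^sup>2 * l2norm_sq \<mu> u)"
      using unn by (intro mult_right_mono) auto
    thus ?thesis by (simp add: mult.assoc)
  qed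
  finally show ?thesis
    unfolding Let_def D_def[symmetric] P_def[symmetric] chi_def[symmetric] L_def[symmetric] \<beta>_def[symmetric] lhs
    by simp
qed

end
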